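(* Let $a\in C^1([0,T]\times[-\pi,\pi])$ solve $$\partial_t a+\Big(\int_{-\pi}^x a(t,\bar x)\,d\bar x\Big)\partial_x a-a^2+\frac1\pi\int_{-\pi}^{\pi}a^2\,dx=0,\qquad \int_{-\pi}^\pi a(t,x)dx=0.$$ Assume $x\mapsto a(0,x)$ attains its maximum at $x_0^*$. Then for all $t\in[0,T]$, $x\mapsto a(t,x)$ attains its maximum at $x^*(t)$, where $x^*$ is the characteristic starting from $x_0^*$.
   Context: The characteristic starting from $x_0^*$ is the solution of $\frac{d}{dt}x^*(t)=\int_{-\pi}^{x^*(t)}a(t,x)\,dx$, $x^*(0)=x_0^*$. *)

theory Defs
  imports "HOL-Analysis.Analysis"
begin

definition characteristic ::
  "(real \<Rightarrow> real \<Rightarrow> real) \<Rightarrow> real \<Rightarrow> real \<Rightarrow> (real \<Rightarrow> real) \<Rightarrow> bool" where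
  "characteristic a T x0 xs \<longleftrightarrow>
     xs 0 = x0 \<and>
     (\<forall>t\<in>{0..T}. xs t \<in> {-pi..pi} \<and>
        (xs has_real_derivative integral {-pi..xs t} (a t)) (at t within {0..T}))"

end

theory Submission
  imports Defs
begin

lemma deriv_left_nonneg:
  fixes g :: "real \<Rightarrow> real"
  assumes d: "(g has_real_derivative D) (at s within {0..T})" and s: "0 < s" "s \<le> T"
    and le: "\<forall>t\<in>{0..<s}. g t \<le> g s"
  shows "D \<ge> 0"
proof -
  have d2: "(g has_real_derivative D) (at s within {0..s})"
    using d by (rule DERIV_subset) (use s in auto)
  hence "((\<lambda>y. (g y - g s) / (y - s)) \<longlongrightarrow> D) (at_left s)"
    using s by (simp add: has_field_derivative_iff at_within_Icc_at_left)
  moreover have "eventually (\<lambda>y. (g y - g s) / (y - s) \<ge> 0) (at_left s)"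
  proof -
    have "eventually (\<lambda>y. y > 0 \<and> y < s) (at_left s)"
        using eventually_at_left_real[of 0 s] s by (auto elim: eventually_mono)
    thus ?thesis
    proof (rule eventually_mono)
      fix y assume "y > 0 \<and> y < s"
      hence "g y - g s \<le> 0" "y - s < 0" using le by auto
      thus "(g y - g s) / (y - s) \<ge> 0" by (simp add: divide_nonpos_neg)
    qed
  qed
  ultimately show ?thesis
    by (rule tendsto_lowerbound) (simp add: trivial_limit_at_left_real)
qed

lemma chain_lemma:
  fixes a a_t a_x :: "real \<Rightarrow> real \<Rightarrow> real" and T :: real and \<gamma> :: "real \<Rightarrow> real"
  assumes C1: "\<forall>p\<in>{0..T} \<times> {-pi..pi}.
      ((\<lambda>(t, x). a t x) has_derivative (\<lambda>(h, k). a_t (fst p) (snd p) * h + a_x (fst p) (snd p) * k))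
        (at p within {0..T} \<times> {-pi..pi})"
    and t: "t \<in> {0..T}"
    and g: "(\<gamma> has_real_derivative d) (at t within {0..T})"
    and gin: "\<forall>\<tau>\<in>{0..T}. \<gamma> \<tau> \<in> {-pi..pi}"
  shows "((\<lambda>\<tau>. a \<tau> (\<gamma> \<tau>)) has_real_derivative (a_t t (\<gamma> t) + a_x t (\<gamma> t) * d)) (at t within {0..T})"
proof -
  have P: "((\<lambda>\<tau>. (\<tau>, \<gamma> \<tau>)) has_derivative (\<lambda>h. (h, h * d))) (at t within {0..T})"
    using g by (auto intro!: derivative_eq_intros simp: has_field_derivative_def mult.commute)
  have A: "((\<lambda>(t, x). a t x) has_derivative (\<lambda>(h, k). a_t t (\<gamma> t) * h + a_x t (\<gamma> t) * k))
        (at (t, \<gamma> t) within (\<lambda>\<tau>. (\<tau>, \<gamma> \<tau>)) ` {0..T})"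
    apply (rule has_derivative_subset[where s="{0..T} \<times> {-pi..pi}"])
    using C1 t gin by auto
  have "(((\<lambda>(t, x). a t x) \<circ> (\<lambda>\<tau>. (\<tau>, \<gamma> \<tau>))) has_derivative
     ((\<lambda>(h, k). a_t t (\<gamma> t) * h + a_x t (\<gamma> t) * k) \<circ> (\<lambda>h. (h, h * d)))) (at t within {0..T})"
    by (rule diff_chain_within[OF P]) (use A in simp)
  thus ?thesis
    apply (simp add: has_field_derivative_def o_def)
    apply (erule has_derivative_eq_rhs)
    by (rule ext) (simp add: algebra_simps)
qed

lemma partial_x:
  fixes a a_t a_x :: "real \<Rightarrow> real \<Rightarrow> real" and T :: real
  assumes C1: "\<forall>p\<in>{0..T} \<times> {-pi..pi}.
      ((\<lambda>(t, x). a t x) has_derivative (\<lambda>(h, k). a_t (fst p) (snd p) * h + a_x (fst p) (snd p) * k))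
        (at p within {0..T} \<times> {-pi..pi})"
    and t: "t \<in> {0..T}" and x: "x \<in> {-pi..pi}"
  shows "(a t has_real_derivative a_x t x) (at x within {-pi..pi})"
proof -
  have P: "((\<lambda>y. (t, y)) has_derivative (\<lambda>k. (0, k))) (at x within {-pi..pi})"
    by (auto intro!: derivative_eq_intros)
  have A: "((\<lambda>(t, x). a t x) has_derivative (\<lambda>(h, k). a_t t x * h + a_x t x * k))
        (at (t, x) within (\<lambda>y. (t, y)) ` {-pi..pi})"
    apply (rule has_derivative_subset[where s="{0..T} \<times> {-pi..pi}"])
    using C1 t x by auto
  have "(((\<lambda>(t, x). a t x) \<circ> (\<lambda>y. (t, y))) has_derivative
     ((\<lambda>(h, k). a_t t x * h + a_x t x * k) \<circ> (\<lambda>k. (0, k)))) (at x within {-pi..pi})"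
    by (rule diff_chain_within[OF P]) (use A in simp)
  thus ?thesis
    by (simp add: has_field_derivative_def o_def)
qed


theorem lemma2p3:
  fixes a a_t a_x :: "real \<Rightarrow> real \<Rightarrow> real" and T x0 :: real and xs :: "real \<Rightarrow> real"
  assumes C1: "\<forall>p\<in>{0..T} \<times> {-pi..pi}.
      ((\<lambda>(t, x). a t x) has_derivative (\<lambda>(h, k). a_t (fst p) (snd p) * h + a_x (fst p) (snd p) * k))
        (at p within {0..T} \<times> {-pi..pi})"
    and cont_t: "continuous_on ({0..T} \<times> {-pi..pi}) (\<lambda>(t, x). a_t t x)"
    and cont_x: "continuous_on ({0..T} \<times> {-pi..pi}) (\<lambda>(t, x). a_x t x)"
    and pde: "\<forall>t\<in>{0..T}. \<forall>x\<in>{-pi..pi}.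
      a_t t x + integral {-pi..x} (a t) * a_x t x - (a t x)\<^sup>2
        + (1 / pi) * integral {-pi..pi} (\<lambda>y. (a t y)\<^sup>2) = 0"
    and mean0: "\<forall>t\<in>{0..T}. integral {-pi..pi} (a t) = 0"
    and x0_in: "x0 \<in> {-pi..pi}"
    and x0_max: "\<forall>x\<in>{-pi..pi}. a 0 x \<le> a 0 x0"
    and char: "characteristic a T x0 xs"
  shows "\<forall>t\<in>{0..T}. \<forall>x\<in>{-pi..pi}. a t x \<le> a t (xs t)"
proof (rule ccontr)
  assume "\<not> ?thesis"
  then obtain t1 x1 where t1: "t1 \<in> {0..T}" and x1: "x1 \<in> {-pi..pi}"
    and gt: "a t1 x1 > a t1 (xs t1)" by force
  have xs0: "xs 0 = x0" and xsin: "\<forall>t\<in>{0..T}. xs t \<in> {-pi..pi}"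
    and xsd: "\<forall>t\<in>{0..T}. (xs has_real_derivative integral {-pi..xs t} (a t)) (at t within {0..T})"
    using char unfolding characteristic_def by auto
  define R where "R = {0..T} \<times> {-pi..pi}"
  define f where "f t = a t (xs t)" for t
  have fd: "(f has_real_derivative (a_t t (xs t) + a_x t (xs t) * integral {-pi..xs t} (a t)))
      (at t within {0..T})" if "t \<in> {0..T}" for t
    unfolding f_def by (rule chain_lemma[OF C1 that xsd[rule_format, OF that] xsin])
  have fcont: "continuous_on {0..T} f"
    unfolding continuous_on_eq_continuous_within
    using fd has_derivative_continuous has_field_derivative_def by blast
  have acont: "continuous_on R (\<lambda>p. a (fst p) (snd p))"
    unfolding continuous_on_eq_continuous_within
  proof
    fix p assume "p \<in> R"
    hence "((\<lambda>(t, x). a t x) has_derivative (\<lambda>(h, k). a_t (fst p) (snd p) * h + a_x (fst p) (snd p) * k))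
        (at p within R)" using C1 unfolding R_def by blast
    hence "continuous (at p within R) (\<lambda>(t, x). a t x)" by (rule has_derivative_continuous)
    moreover have "(\<lambda>p. a (fst p) (snd p)) = (\<lambda>(t, x). a t x)" by auto
    ultimately show "continuous (at p within R) (\<lambda>p. a (fst p) (snd p))" by simp
  qed
  have cR: "compact R" unfolding R_def by (intro compact_Times compact_Icc)
  have "bounded ((\<lambda>p. a (fst p) (snd p)) ` R)"
    by (rule compact_imp_bounded[OF compact_continuous_image[OF acont cR]])
  then obtain B where B: "\<forall>p\<in>R. \<bar>a (fst p) (snd p)\<bar> \<le> B" unfolding bounded_real by auto
  define K where "K = 2 * B + 1"
  define \<epsilon> where "\<epsilon> = (a t1 x1 - f t1) * exp (- K * t1) / 2"
  have \<epsilon>pos: "\<epsilon> > 0" unfolding \<epsilon>_def f_def using gt by simp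
  define \<phi> where "\<phi> t x = (a t x - f t) * exp (- K * t) - \<epsilon>" for t x
  define R1 where "R1 = {0..t1} \<times> {-pi..pi}"
  have R1R: "R1 \<subseteq> R" unfolding R1_def R_def using t1 by auto
  have fcont1: "continuous_on R1 (\<lambda>p. f (fst p))"
    by (rule continuous_on_compose2[OF fcont continuous_on_fst[OF continuous_on_id]])
      (use t1 in \<open>auto simp: R1_def\<close>)
  have phicont: "continuous_on R1 (\<lambda>p. \<phi> (fst p) (snd p))"
    unfolding \<phi>_def
    by (intro continuous_intros continuous_on_subset[OF acont R1R] fcont1)
  define S where "S = fst ` {p \<in> R1. (\<lambda>_. 0) p \<le> \<phi> (fst p) (snd p)}"
  have cR1: "compact R1" unfolding R1_def by (intro compact_Times compact_Icc)
  have "closed {p \<in> R1. (\<lambda>_. 0) p \<le> \<phi> (fst p) (snd p)}"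
    by (rule continuous_on_closed_Collect_le[OF continuous_on_const phicont])
      (use cR1 compact_imp_closed in auto)
  moreover have "bounded {p \<in> R1. (\<lambda>_. 0) p \<le> \<phi> (fst p) (snd p)}"
    by (rule bounded_subset[OF compact_imp_bounded[OF cR1]]) auto
  ultimately have "compact {p \<in> R1. (\<lambda>_. 0) p \<le> \<phi> (fst p) (snd p)}"
    using compact_eq_bounded_closed by blast
  hence cS: "compact S" unfolding S_def
    by (rule compact_continuous_image[OF continuous_on_fst[OF continuous_on_id]])
  have "\<phi> t1 x1 = \<epsilon>" unfolding \<phi>_def \<epsilon>_def by simp
  hence "t1 \<in> S" unfolding S_def R1_def using t1 x1 \<epsilon>pos by force
  hence "S \<noteq> {}" by auto
  then obtain s where sS: "s \<in> S" and smin: "\<forall>y\<in>S. s \<le> y"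
    using compact_attains_inf[OF cS] by blast
  then obtain xw where s01: "s \<in> {0..t1}" and xw: "xw \<in> {-pi..pi}" and phw: "\<phi> s xw \<ge> 0"
    unfolding S_def R1_def by auto
  have sT: "s \<in> {0..T}" using s01 t1 by auto
  have phi0: "\<phi> 0 x < 0" if "x \<in> {-pi..pi}" for x
  proof -
    have "a 0 x \<le> a 0 x0" using x0_max that by blast
    thus ?thesis unfolding \<phi>_def f_def using xs0 \<epsilon>pos by simp
  qed
  have spos: "s > 0"
  proof (rule ccontr)
    assume "\<not> s > 0" hence "s = 0" using s01 by auto
    thus False using phw phi0[OF xw] by simp
  qed
  have before: "\<phi> t x < 0" if "t \<in> {0..<s}" "x \<in> {-pi..pi}" for t x
  proof (rule ccontr)
    assume "\<not> \<phi> t x < 0"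
    hence "t \<in> S" unfolding S_def R1_def using that s01 by force
    thus False using smin that by force
  qed
  have pdx: "(a s has_real_derivative a_x s x) (at x within {-pi..pi})" if "x \<in> {-pi..pi}" for x
    by (rule partial_x[OF C1 sT that])
  have ascont: "continuous_on {-pi..pi} (a s)"
    unfolding continuous_on_eq_continuous_within
    using pdx has_derivative_continuous has_field_derivative_def by blast
  obtain xm where xm: "xm \<in> {-pi..pi}" and xmmax: "\<forall>y\<in>{-pi..pi}. a s y \<le> a s xm"
    using continuous_attains_sup[OF compact_Icc _ ascont] by auto
  define m where "m = a s xm"
  define fs where "fs = f s"
  have "\<phi> s xm \<ge> \<phi> s xw" unfolding \<phi>_def
    using xmmax xw by (intro diff_right_mono mult_right_mono) auto
  hence "(m - fs) * exp (- K * s) \<ge> \<epsilon>" using phw unfolding \<phi>_def m_def fs_def by linarith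
  hence "(m - fs) * exp (- K * s) > 0" using \<epsilon>pos by linarith
  hence mfs: "m - fs > 0" by (simp add: zero_less_mult_iff)
  have prod0: "integral {-pi..xm} (a s) * a_x s xm = 0"
  proof (cases "xm = -pi \<or> xm = pi")
    case True thus ?thesis using mean0 sT by auto
  next
    case False
    hence int: "-pi < xm" "xm < pi" using xm by auto
    have "(a s has_real_derivative a_x s xm) (at xm)"
      using pdx[OF xm] at_within_Icc_at[OF int] by simp
    moreover have "\<forall>y. \<bar>xm - y\<bar> < min (xm + pi) (pi - xm) \<longrightarrow> a s y \<le> a s xm"
    proof (intro allI impI)
      fix y assume "\<bar>xm - y\<bar> < min (xm + pi) (pi - xm)"
      hence "y \<in> {-pi..pi}" by (simp add: abs_less_iff)
      thus "a s y \<le> a s xm" using xmmax by blast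
    qed
    ultimately have "a_x s xm = 0"
      using DERIV_local_max[where f="a s" and x=xm and l="a_x s xm" and d="min (xm + pi) (pi - xm)"] int by auto
    thus ?thesis by simp
  qed
  define c where "c = (1 / pi) * integral {-pi..pi} (\<lambda>y. (a s y)\<^sup>2)"
  have "a_t s xm + integral {-pi..xm} (a s) * a_x s xm - (a s xm)\<^sup>2
        + (1 / pi) * integral {-pi..pi} (\<lambda>y. (a s y)\<^sup>2) = 0" using pde sT xm by blast
  hence at_m: "a_t s xm = m^2 - c" using prod0 unfolding m_def c_def by linarith
  define F' where "F' = a_t s (xs s) + a_x s (xs s) * integral {-pi..xs s} (a s)"
  have "a_t s (xs s) + integral {-pi..xs s} (a s) * a_x s (xs s) - (a s (xs s))\<^sup>2
        + (1 / pi) * integral {-pi..pi} (\<lambda>y. (a s y)\<^sup>2) = 0" using pde sT xsin by blast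
  hence F': "F' = fs^2 - c" unfolding F'_def fs_def f_def c_def by (simp add: mult.commute)
  have d1: "((\<lambda>t. a t xm) has_real_derivative a_t s xm) (at s within {0..T})"
    using chain_lemma[OF C1 sT, of "\<lambda>_. xm" 0] xm by simp
  have d3: "((\<lambda>t. exp (- K * t)) has_real_derivative (exp (- K * s) * (- K))) (at s within {0..T})"
    by (auto intro!: derivative_eq_intros)
  have dg: "((\<lambda>t. (a t xm - f t) * exp (- K * t)) has_real_derivative
      ((a_t s xm - F') * exp (- K * s) + exp (- K * s) * (- K) * (a s xm - f s))) (at s within {0..T})"
    using DERIV_mult[OF DERIV_diff[OF d1 fd[OF sT]] d3] unfolding F'_def by simp
  have "((a_t s xm - F') * exp (- K * s) + exp (- K * s) * (- K) * (a s xm - f s)) \<ge> 0"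
  proof (rule deriv_left_nonneg[OF dg spos])
    show "s \<le> T" using sT by auto
    show "\<forall>t\<in>{0..<s}. (a t xm - f t) * exp (- K * t) \<le> (a s xm - f s) * exp (- K * s)"
    proof
      fix t assume "t \<in> {0..<s}"
      from before[OF this xm] phw \<open>\<phi> s xm \<ge> \<phi> s xw\<close>
      show "(a t xm - f t) * exp (- K * t) \<le> (a s xm - f s) * exp (- K * s)"
        unfolding \<phi>_def by linarith
    qed
  qed
  hence "exp (- K * s) * ((m - fs) * (m + fs - K)) \<ge> 0"
    unfolding at_m F' m_def fs_def by (simp add: algebra_simps power2_eq_square)
  hence ge: "(m - fs) * (m + fs - K) \<ge> 0"
    by (simp add: zero_le_mult_iff)
  have "\<bar>m\<bar> \<le> B" using B xm sT unfolding m_def R_def by force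
  moreover have "\<bar>fs\<bar> \<le> B" using B xsin sT unfolding fs_def f_def R_def by force
  ultimately have "m + fs - K < 0" unfolding K_def by linarith
  hence "(m - fs) * (m + fs - K) < 0" using mfs by (simp add: mult_pos_neg)
  thus False using ge by linarith
qed

end
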